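(* Let $d_x, d_1, d_2 \ge 1$ be integers and let $\sigma:\mathbb{R}\to\mathbb{R}$ be a continuous piecewise linear function with $p \ge 2$ linear pieces. Let $\alpha_1,\alpha_2\in[0,1]$ be such that $\alpha_1 d_1$ and $\alpha_2 d_2$ are integers. Consider the architecture of selectively linearized fully connected networks $f_W:\mathbb{R}^{d_x}\to\mathbb{R}$ with two hidden layers of widths $d_1$ and $d_2$: $$z^1 = W^1 x + b^1,\quad a^1 = \phi_1(z^1),\quad z^2 = W^2 a^1 + b^2,\quad a^2=\phi_2(z^2),\quad f_W(x) = W^3 a^2 + b^3,$$ where $W^1\in\mathbb{R}^{d_1\times d_x}$, $W^2\in\mathbb{R}^{d_2\times d_1}$, $W^3\in\mathbb{R}^{1\times d_2}$, $b^1\in\mathbb{R}^{d_1}$, $b^2\in\mathbb{R}^{d_2}$, $b^3\in\mathbb{R}$ are the learnable parameters $W$, and for $l\in\{1,2\}$ the map $\phi_l$ acts coordinatewise by $$(\phi_l(z))_k = \begin{cases}\sigma(z_k) & \text{if } k\in\{1,\dots,\alpha_l d_l\},\\ z_k & \text{if } k\in\{\alpha_l d_l+1,\dots,d_l\}.\end{cases}$$ Then the memorization capacity of this architecture is at most $$\alpha_1\alpha_2 d_1 d_2\, p(p-1) + \alpha_2 d_2 (p-1) + \alpha_1(1-\alpha_2) d_1 d_2 (p-1) + 2.$$ In particular, when $\sigma$ is the ReLU ($p=2$), the memorization capacity is at most $\alpha_1(1+\alpha_2) d_1 d_2 + \alpha_2 d_2 + 2$.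
   Context: Memorization capacity: for a network architecture $f_W$ with learnable parameters $W$ and input dimension $d_x$, the memorization capacity is the largest $N$ such that for every choice of inputs $x_1,\dots,x_N\in\mathbb{R}^{d_x}$ (pairwise distinct) and every choice of labels $y_1,\dots,y_N\in[-1,1]$, there exist parameters $W$ with $f_W(x_i)=y_i$ for all $1\le i\le N$. A function $\mathbb{R}\to\mathbb{R}$ has "$p$ linear pieces" if $\mathbb{R}$ can be partitioned into $p$ intervals on each of which it is affine (and not fewer). The neurons with index $k\le \alpha_l d_l$ in layer $l$ keep the nonlinearity; the remaining ones are replaced by the identity ("linearized"). *)

theory Defs
  imports "HOL-Analysis.Analysis"
begin

definition affine_on_set :: "real set \<Rightarrow> (real \<Rightarrow> real) \<Rightarrow> bool" where
  "affine_on_set I f \<longleftrightarrow> (\<exists>a b. \<forall>x\<in>I. f x = a * x + b)"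

definition pieces_partition :: "(real \<Rightarrow> real) \<Rightarrow> nat \<Rightarrow> bool" where
  "pieces_partition f q \<longleftrightarrow> (\<exists>P. finite P \<and> card P = q \<and>
      (\<forall>I\<in>P. is_interval I \<and> I \<noteq> {} \<and> affine_on_set I f) \<and>
      pairwise disjnt P \<and> \<Union>P = UNIV)"

definition has_linear_pieces :: "(real \<Rightarrow> real) \<Rightarrow> nat \<Rightarrow> bool" where
  "has_linear_pieces f p \<longleftrightarrow> pieces_partition f p \<and> (\<forall>q<p. \<not> pieces_partition f q)"

text \<open>Selectively linearized two-hidden-layer network. Vectors are functions nat => real,
  with coordinates 0..d-1 (0-based); neurons with index < k_l keep the nonlinearity sigma.\<close>
definition slnet ::
  "nat \<Rightarrow> nat \<Rightarrow> nat \<Rightarrow> nat \<Rightarrow> nat \<Rightarrow> (real \<Rightarrow> real) \<Rightarrow>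
   (nat \<Rightarrow> nat \<Rightarrow> real) \<Rightarrow> (nat \<Rightarrow> real) \<Rightarrow>
   (nat \<Rightarrow> nat \<Rightarrow> real) \<Rightarrow> (nat \<Rightarrow> real) \<Rightarrow>
   (nat \<Rightarrow> real) \<Rightarrow> real \<Rightarrow> (nat \<Rightarrow> real) \<Rightarrow> real" where
  "slnet dx d1 d2 k1 k2 \<sigma> W1 b1 W2 b2 W3 b3 x =
    (let z1 = (\<lambda>i. (\<Sum>j<dx. W1 i j * x j) + b1 i);
         a1 = (\<lambda>i. if i < k1 then \<sigma> (z1 i) else z1 i);
         z2 = (\<lambda>i. (\<Sum>j<d1. W2 i j * a1 j) + b2 i);
         a2 = (\<lambda>i. if i < k2 then \<sigma> (z2 i) else z2 i)
     in (\<Sum>i<d2. W3 i * a2 i) + b3)"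

definition memorizes ::
  "nat \<Rightarrow> nat \<Rightarrow> nat \<Rightarrow> nat \<Rightarrow> nat \<Rightarrow> (real \<Rightarrow> real) \<Rightarrow> nat \<Rightarrow> bool" where
  "memorizes dx d1 d2 k1 k2 \<sigma> N \<longleftrightarrow>
    (\<forall>(xs :: nat \<Rightarrow> nat \<Rightarrow> real) (ys :: nat \<Rightarrow> real).
       (\<forall>i<N. \<forall>j<N. i \<noteq> j \<longrightarrow> (\<exists>t<dx. xs i t \<noteq> xs j t)) \<and> (\<forall>i<N. \<bar>ys i\<bar> \<le> 1) \<longrightarrow>
       (\<exists>W1 b1 W2 b2 W3 b3. \<forall>i<N. slnet dx d1 d2 k1 k2 \<sigma> W1 b1 W2 b2 W3 b3 (xs i) = ys i))"

end

theory Submission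
  imports Defs
begin

definition pl :: "real set \<Rightarrow> (real \<Rightarrow> real) \<Rightarrow> bool" where
  "pl S g \<longleftrightarrow> (\<forall>a b. S \<inter> {a<..<b} = {} \<longrightarrow> affine_on_set {a..b} g)"

lemma affine_triv: assumes "\<not> a < b" shows "affine_on_set {a..(b::real)} g"
proof -
  have "\<forall>x\<in>{a..b}. g x = 0 * x + g a"
  proof
    fix x assume "x \<in> {a..b}"
    with assms have "x = a" by auto
    then show "g x = 0 * x + g a" by simp
  qed
  then show ?thesis unfolding affine_on_set_def by blast
qed

lemma affine_sub: "affine_on_set A g \<Longrightarrow> B \<subseteq> A \<Longrightarrow> affine_on_set B g"
  unfolding affine_on_set_def by blast

lemma pl_mono: "pl S f \<Longrightarrow> S \<subseteq> S' \<Longrightarrow> pl S' f"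
  unfolding pl_def by blast

lemma pl_add: "pl S f \<Longrightarrow> pl T g \<Longrightarrow> pl (S \<union> T) (\<lambda>t. f t + g t)"
  unfolding pl_def affine_on_set_def
proof (intro allI impI)
  fix a b assume f: "\<forall>a b. S \<inter> {a<..<b} = {} \<longrightarrow> (\<exists>c d. \<forall>x\<in>{a..b}. f x = c * x + d)"
    and g: "\<forall>a b. T \<inter> {a<..<b} = {} \<longrightarrow> (\<exists>c d. \<forall>x\<in>{a..b}. g x = c * x + d)"
    and h: "(S \<union> T) \<inter> {a<..<b} = {}"
  from f h obtain c d where 1: "\<forall>x\<in>{a..b}. f x = c * x + d" by blast
  from g h obtain c' d' where 2: "\<forall>x\<in>{a..b}. g x = c' * x + d'" by blast
  show "\<exists>c d. \<forall>x\<in>{a..b}. f x + g x = c * x + d"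
    using 1 2 by (intro exI[of _ "c+c'"] exI[of _ "d+d'"]) (simp add: algebra_simps)
qed

lemma pl_scale: "pl S f \<Longrightarrow> pl S (\<lambda>t. c * f t)"
  unfolding pl_def affine_on_set_def
proof (intro allI impI)
  fix a b assume f: "\<forall>a b. S \<inter> {a<..<b} = {} \<longrightarrow> (\<exists>c d. \<forall>x\<in>{a..b}. f x = c * x + d)"
    and h: "S \<inter> {a<..<b} = {}"
  from f h obtain c' d where 1: "\<forall>x\<in>{a..b}. f x = c' * x + d" by blast
  show "\<exists>c' d. \<forall>x\<in>{a..b}. c * f x = c' * x + d"
    using 1 by (intro exI[of _ "c*c'"] exI[of _ "c*d"]) (simp add: algebra_simps)
qed

lemma pl_lin: "pl S (\<lambda>t. c * t + d)"
  unfolding pl_def affine_on_set_def by blast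

lemma pl_const: "pl S (\<lambda>t. d)"
  unfolding pl_def affine_on_set_def by (auto intro: exI[of _ 0])

lemma pl_add_const: "pl S f \<Longrightarrow> pl S (\<lambda>t. f t + d)"
  using pl_add[OF _ pl_const, of S f S d] by simp

lemma pl_sum: "finite I \<Longrightarrow> (\<forall>i\<in>I. pl (A i) (f i)) \<Longrightarrow> pl (\<Union>i\<in>I. A i) (\<lambda>t. \<Sum>i\<in>I. f i t)"
proof (induction I rule: finite_induct)
  case empty
  then show ?case using pl_const[of "{}" 0] by simp
next
  case (insert x F)
  have "pl (A x \<union> (\<Union>i\<in>F. A i)) (\<lambda>t. f x t + (\<Sum>i\<in>F. f i t))"
    using insert by (intro pl_add) auto
  then show ?case using insert by simp
qed

definition lc :: "(real \<Rightarrow> real) \<Rightarrow> real \<Rightarrow> bool" where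
  "lc g x \<longleftrightarrow> (\<exists>e>0. \<forall>y. \<bar>y - x\<bar> < e \<longrightarrow> g y = g x)"

lemma left_gap:
  fixes x :: real
  assumes "finite S" "x \<notin> S"
  shows "\<exists>e>0. S \<inter> {x-e<..x} = {}"
proof (cases "{s\<in>S. s < x} = {}")
  case True
  have "S \<inter> {x-1<..x} = {}"
  proof (rule ccontr)
    assume "S \<inter> {x-1<..x} \<noteq> {}"
    then obtain s where s: "s \<in> S" "s \<le> x" by auto
    with assms(2) have "s < x" by (cases "s = x") auto
    with s True show False by auto
  qed
  then show ?thesis by (intro exI[of _ 1]) auto
next
  case False
  let ?L = "{s\<in>S. s < x}"
  have fin: "finite ?L" using assms(1) by simp
  have m: "Max ?L \<in> ?L" using Max_in[OF fin False] .
  show ?thesis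
  proof (intro exI[of _ "x - Max ?L"] conjI)
    show "x - Max ?L > 0" using m by simp
    show "S \<inter> {x - (x - Max ?L)<..x} = {}"
    proof (rule ccontr)
      assume "S \<inter> {x - (x - Max ?L)<..x} \<noteq> {}"
      then obtain s where s: "s \<in> S" "Max ?L < s" "s \<le> x" by auto
      with assms(2) have "s < x" by (cases "s = x") auto
      with s have "s \<in> ?L" by simp
      hence "s \<le> Max ?L" using Max_ge[OF fin] by blast
      with s show False by simp
    qed
  qed
qed

lemma inj_aux:
  assumes fin: "finite S" and pl: "pl S g" and xS: "x \<notin> S" and xy: "x < y"
    and geq: "g x = g y" and ceq: "card {s\<in>S. s < x} = card {s\<in>S. s < y}"
  shows "lc g x"
proof -
  have gap: "S \<inter> {x..<y} = {}"
  proof (rule ccontr)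
    assume "S \<inter> {x..<y} \<noteq> {}"
    then obtain s where s: "s \<in> S" "x \<le> s" "s < y" by auto
    have "{s\<in>S. s < x} \<subseteq> {s\<in>S. s < y}" using xy by auto
    moreover have "s \<in> {s\<in>S. s < y}" "s \<notin> {s\<in>S. s < x}" using s by auto
    ultimately have "{s\<in>S. s < x} \<subset> {s\<in>S. s < y}" by blast
    hence "card {s\<in>S. s < x} < card {s\<in>S. s < y}" using fin by (intro psubset_card_mono) auto
    with ceq show False by simp
  qed
  obtain e where e: "e > 0" "S \<inter> {x-e<..x} = {}" using left_gap[OF fin xS] by blast
  have "S \<inter> {x-e<..<y} = {}"
  proof (rule ccontr)
    assume "S \<inter> {x-e<..<y} \<noteq> {}"
    then obtain t where t: "t \<in> S" "x - e < t" "t < y" by auto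
    show False
    proof (cases "t \<le> x")
      case True then have "t \<in> S \<inter> {x-e<..x}" using t by simp
      then show False using e(2) by blast
    next
      case False then have "t \<in> S \<inter> {x..<y}" using t by simp
      then show False using gap by blast
    qed
  qed
  with pl obtain c d where cd: "\<forall>z\<in>{x-e..y}. g z = c * z + d"
    unfolding pl_def affine_on_set_def by blast
  have "c * x + d = c * y + d" using cd geq xy e(1) by auto
  hence c0: "c = 0" using xy by simp
  define mu where "mu = min e (y - x)"
  have mu: "mu > 0" "mu \<le> e" "mu \<le> y - x" unfolding mu_def using e(1) xy by auto
  show ?thesis unfolding lc_def
  proof (intro exI[of _ mu] conjI allI impI)
    show "mu > 0" using mu by simp
    fix z assume "\<bar>z - x\<bar> < mu"
    hence "z \<in> {x-e..y}" "x \<in> {x-e..y}" using mu by (auto simp: abs_less_iff)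
    then show "g z = g x" using cd c0 by simp
  qed
qed

lemma pl_comp:
  assumes finS: "finite S" and plg: "pl S g" and finR: "finite R" and pls: "pl R \<sigma>"
  shows "\<exists>T. finite T \<and> card T \<le> card R * (card S + 1) \<and> pl (S \<union> T) (\<lambda>t. \<sigma> (g t))"
proof -
  define T where "T = {x. x \<notin> S \<and> g x \<in> R \<and> \<not> lc g x}"
  define h where "h x = (g x, card {s\<in>S. s < x})" for x
  have sub: "h ` T \<subseteq> R \<times> {..card S}"
  proof
    fix p assume "p \<in> h ` T"
    then obtain x where "x \<in> T" "p = h x" by auto
    moreover have "card {s\<in>S. s < x} \<le> card S" using finS by (intro card_mono) auto
    ultimately show "p \<in> R \<times> {..card S}" unfolding T_def h_def by auto
  qed
  have inj: "inj_on h T"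
  proof (rule inj_onI)
    fix x y assume x: "x \<in> T" and y: "y \<in> T" and hxy: "h x = h y"
    hence g: "g x = g y" and c: "card {s\<in>S. s < x} = card {s\<in>S. s < y}" unfolding h_def by auto
    show "x = y"
    proof (rule ccontr)
      assume "x \<noteq> y"
      then consider "x < y" | "y < x" by linarith
      then show False
      proof cases
        case 1
        then have "lc g x" using inj_aux[OF finS plg _ 1 g c] x unfolding T_def by auto
        then show False using x unfolding T_def by auto
      next
        case 2
        then have "lc g y" using inj_aux[OF finS plg _ 2 g[symmetric] c[symmetric]] y unfolding T_def by auto
        then show False using y unfolding T_def by auto
      qed
    qed
  qed
  have finB: "finite (R \<times> {..card S})" using finR by simp
  have finT: "finite T" using inj_on_finite[OF inj sub finB] .
  have cardT: "card T \<le> card R * (card S + 1)"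
    using card_inj_on_le[OF inj sub finB] by (simp add: card_cartesian_product)
  have "pl (S \<union> T) (\<lambda>t. \<sigma> (g t))"
    unfolding pl_def
  proof (intro allI impI)
    fix a b assume ab: "(S \<union> T) \<inter> {a<..<b} = {}"
    show "affine_on_set {a..b} (\<lambda>t. \<sigma> (g t))"
    proof (cases "a < b")
      case False then show ?thesis by (rule affine_triv)
    next
      case True
      from ab have "S \<inter> {a<..<b} = {}" by auto
      with plg obtain c d where cd: "\<forall>x\<in>{a..b}. g x = c * x + d"
        unfolding pl_def affine_on_set_def by blast
      show ?thesis
      proof (cases "c = 0")
        case True
        then have "\<forall>x\<in>{a..b}. \<sigma> (g x) = 0 * x + \<sigma> d" using cd by simp
        then show ?thesis unfolding affine_on_set_def by blast
      next
        case False
        define lo where "lo = min (g a) (g b)"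
        define hi where "hi = max (g a) (g b)"
        have ga: "g a = c * a + d" and gb: "g b = c * b + d" using cd True by auto
        have Rgap: "R \<inter> {lo<..<hi} = {}"
        proof (rule ccontr)
          assume "R \<inter> {lo<..<hi} \<noteq> {}"
          then obtain r where r: "r \<in> R" "lo < r" "r < hi" by auto
          define z where "z = (r - d) / c"
          have rz: "c * z + d = r" unfolding z_def using False by simp
          have zab: "a < z \<and> z < b"
          proof (cases "c > 0")
            case True
            have "c*a < c*b" using mult_strict_left_mono[OF \<open>a<b\<close> True] .
            then have "lo = c*a+d" "hi = c*b+d" unfolding lo_def hi_def using ga gb
              by (simp_all add: min_def max_def)
            then have "c*a < c*z" "c*z < c*b" using r rz by auto
            then show ?thesis using True by (simp add: mult_less_cancel_left)
          next
            case c: False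
            with \<open>c \<noteq> 0\<close> have "c < 0" by simp
            have "c*b < c*a" using mult_strict_left_mono_neg[OF \<open>a<b\<close> \<open>c<0\<close>] .
            then have "lo = c*b+d" "hi = c*a+d" unfolding lo_def hi_def using ga gb
              by (simp_all add: min_def max_def)
            then have "c*b < c*z" "c*z < c*a" using r rz by auto
            then show ?thesis using \<open>c < 0\<close> by (simp add: mult_less_cancel_left)
          qed
          have gz: "g z = r" using cd zab rz by auto
          have zS: "z \<notin> S" using \<open>S \<inter> {a<..<b} = {}\<close> zab by auto
          have nlc: "\<not> lc g z"
          proof
            assume "lc g z"
            then obtain e where e: "e > 0" "\<forall>y. \<bar>y - z\<bar> < e \<longrightarrow> g y = g z" unfolding lc_def by auto
            define mu where "mu = min (e/2) ((b-z)/2)"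
            have m: "0 < mu" "mu \<le> e/2" "mu \<le> (b-z)/2"
              unfolding mu_def using e(1) zab min.cobounded1[of "e/2" "(b-z)/2"] min.cobounded2[of "e/2" "(b-z)/2"] by auto
            define y where "y = z + mu"
            have y1: "\<bar>y - z\<bar> < e" "y \<noteq> z" "y \<in> {a..b}" using m zab e(1) unfolding y_def by auto
            have "g y = c * y + d" using cd y1 by auto
            moreover have "g y = c * z + d" using e(2) y1 gz rz by auto
            ultimately show False using False y1(2) by simp
          qed
          have "z \<in> T" unfolding T_def using zS gz r nlc by auto
          then show False using ab zab by auto
        qed
        with pls obtain \<gamma> \<delta> where gd: "\<forall>w\<in>{lo..hi}. \<sigma> w = \<gamma> * w + \<delta>"
          unfolding pl_def affine_on_set_def by blast
        have "\<forall>x\<in>{a..b}. \<sigma> (g x) = (\<gamma> * c) * x + (\<gamma> * d + \<delta>)"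
        proof
          fix x assume x: "x \<in> {a..b}"
          have gx: "g x = c * x + d" using cd x by auto
          have "g x \<in> {lo..hi}"
          proof (cases "c > 0")
            case True
            then have "c*a \<le> c*x" "c*x \<le> c*b" using x mult_left_mono[of a x c] mult_left_mono[of x b c] by auto
            then show ?thesis using gx ga gb unfolding lo_def hi_def by (simp add: min_def max_def)
          next
            case c: False
            then have "c \<le> 0" by simp
            then have "c*x \<le> c*a" "c*b \<le> c*x" using x mult_left_mono_neg[of a x c] mult_left_mono_neg[of x b c] by auto
            then show ?thesis using gx ga gb unfolding lo_def hi_def by (simp add: min_def max_def)
          qed
          then show "\<sigma> (g x) = (\<gamma> * c) * x + (\<gamma> * d + \<delta>)" using gd gx by (simp add: algebra_simps)
        qed
        then show ?thesis unfolding affine_on_set_def by blast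
      qed
    qed
  qed
  then show ?thesis using finT cardT by blast
qed

lemma incr_chain:
  fixes u :: "nat \<Rightarrow> real"
  assumes "\<forall>i<n. u i < u (Suc i)" "i < j" "j \<le> n"
  shows "u i < u j"
  using assms(2,3)
proof (induction j)
  case 0 then show ?case by simp
next
  case (Suc j)
  show ?case
  proof (cases "i = j")
    case True then show ?thesis using assms(1) Suc.prems by auto
  next
    case False
    then have "u i < u j" using Suc by auto
    moreover have "u j < u (Suc j)" using assms(1) Suc.prems by auto
    ultimately show ?thesis by simp
  qed
qed

lemma sign_aux:
  fixes D0 X D1 D2 :: real
  assumes "D0 * X < 0" "D0 * D1 < 0" "D1 * D2 < 0"
  shows "X * D2 < 0"
  using assms by (auto simp: mult_less_0_iff)

lemma zigzag:
  fixes f :: "real \<Rightarrow> real" and S :: "real set"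
  assumes fin: "finite S" and pl: "pl S f"
  shows "(\<forall>i<n. u i < u (Suc i)) \<Longrightarrow>
    (\<forall>i. Suc i < n \<longrightarrow> (f (u (Suc i)) - f (u i)) * (f (u (Suc (Suc i))) - f (u (Suc i))) < 0) \<Longrightarrow>
    n - 1 \<le> card (S \<inter> {u 0<..<u n})"
proof (induction n arbitrary: u)
  case 0 then show ?case by simp
next
  case (Suc n)
  note inc = Suc.prems(1) and zz = Suc.prems(2)
  show ?case
  proof (cases "n = 0")
    case True then show ?thesis by simp
  next
    case False
    then have n1: "n \<ge> 1" by simp
    have u01: "u 0 < u 1" using inc n1 by auto
    have u12: "u 1 < u 2" using inc[rule_format, of 1] n1 by (simp add: numeral_2_eq_2)
    have u2n: "u 2 \<le> u (Suc n)"
    proof (cases "n = 1")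
      case True then show ?thesis by (simp add: numeral_2_eq_2)
    next
      case False then show ?thesis using incr_chain[OF inc, of 2 "Suc n"] n1 by simp
    qed
    have u1n: "u 1 < u (Suc n)" using u12 u2n by simp
    have z0: "(f (u 1) - f (u 0)) * (f (u 2) - f (u 1)) < 0"
      using zz[rule_format, of 0] n1 by (simp add: numeral_2_eq_2)
    have finB: "finite (S \<inter> {u 0<..<u (Suc n)})" using fin by simp
    show ?thesis
    proof (cases "\<exists>c\<in>S. u 0 < c \<and> c \<le> u 1")
      case True
      then obtain c where c: "c \<in> S" "u 0 < c" "c \<le> u 1" by blast
      have IH: "n - 1 \<le> card (S \<inter> {u (Suc 0)<..<u (Suc n)})"
        using Suc.IH[of "\<lambda>i. u (Suc i)"] inc zz by auto
      have sub: "insert c (S \<inter> {u 1<..<u (Suc n)}) \<subseteq> S \<inter> {u 0<..<u (Suc n)}"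
        using c u01 u1n by auto
      have "card (insert c (S \<inter> {u 1<..<u (Suc n)})) = Suc (card (S \<inter> {u 1<..<u (Suc n)}))"
        using fin c by (intro card_insert_disjoint) auto
      moreover have "card (insert c (S \<inter> {u 1<..<u (Suc n)})) \<le> card (S \<inter> {u 0<..<u (Suc n)})"
        using card_mono[OF finB sub] .
      ultimately show ?thesis using IH n1 by simp
    next
      case noA: False
      show ?thesis
      proof (cases "S \<inter> {u 1<..<u 2} = {}")
        case True
        have "S \<inter> {u 0<..<u 2} = {}"
        proof (rule ccontr)
          assume "S \<inter> {u 0<..<u 2} \<noteq> {}"
          then obtain t where t: "t \<in> S" "u 0 < t" "t < u 2" by auto
          show False
          proof (cases "t \<le> u 1")
            case True then show False using noA t by blast
          next
            case False then show False using \<open>S \<inter> {u 1<..<u 2} = {}\<close> t by auto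
          qed
        qed
        with pl obtain a b where ab: "\<forall>x\<in>{u 0..u 2}. f x = a * x + b"
          unfolding pl_def affine_on_set_def by blast
        have "f (u 0) = a * u 0 + b" "f (u 1) = a * u 1 + b" "f (u 2) = a * u 2 + b"
          using ab u01 u12 by auto
        then have "(f (u 1) - f (u 0)) * (f (u 2) - f (u 1)) = (a * a) * ((u 1 - u 0) * (u 2 - u 1))"
          by (simp add: algebra_simps)
        moreover have "(a * a) * ((u 1 - u 0) * (u 2 - u 1)) \<ge> 0"
          using mult_nonneg_nonneg[OF zero_le_square[of a] mult_nonneg_nonneg[of "u 1 - u 0" "u 2 - u 1"]] u01 u12 by simp
        ultimately show ?thesis using z0 by simp
      next
        case False
        define Q where "Q = S \<inter> {u 1<..<u 2}"
        have finQ: "finite Q" using fin unfolding Q_def by simp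
        define c where "c = Min Q"
        have cQ: "c \<in> Q" using Min_in[OF finQ] False unfolding c_def Q_def by blast
        have cmin: "\<And>t. t \<in> Q \<Longrightarrow> c \<le> t" using Min_le[OF finQ] unfolding c_def by blast
        have c1: "c \<in> S" "u 1 < c" "c < u 2" using cQ unfolding Q_def by auto
        have "S \<inter> {u 0<..<c} = {}"
        proof (rule ccontr)
          assume "S \<inter> {u 0<..<c} \<noteq> {}"
          then obtain t where t: "t \<in> S" "u 0 < t" "t < c" by auto
          show False
          proof (cases "t \<le> u 1")
            case True then show False using noA t by blast
          next
            case False
            then have "t \<in> Q" unfolding Q_def using t c1 by auto
            then show False using cmin t by force
          qed
        qed
        with pl obtain a b where ab: "\<forall>x\<in>{u 0..c}. f x = a * x + b"
          unfolding pl_def affine_on_set_def by blast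
        have fv: "f (u 0) = a * u 0 + b" "f (u 1) = a * u 1 + b" "f c = a * c + b"
          using ab u01 c1 by auto
        define D0 where "D0 = f (u 1) - f (u 0)"
        define D1 where "D1 = f (u 2) - f (u 1)"
        define X where "X = f (u 2) - f c"
        have "D0 * X = D0 * D1 - (a * a) * ((u 1 - u 0) * (c - u 1))"
          unfolding D0_def D1_def X_def using fv by (simp add: algebra_simps)
        moreover have "(a * a) * ((u 1 - u 0) * (c - u 1)) \<ge> 0"
          using mult_nonneg_nonneg[OF zero_le_square[of a] mult_nonneg_nonneg[of "u 1 - u 0" "c - u 1"]] u01 c1 by simp
        moreover have "D0 * D1 < 0" using z0 unfolding D0_def D1_def .
        ultimately have D0X: "D0 * X < 0" by simp
        define u' where "u' = (\<lambda>i. if i = 0 then c else u (Suc i))"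
        have inc': "\<forall>i<n. u' i < u' (Suc i)"
          unfolding u'_def using c1 inc by (auto simp: numeral_2_eq_2)
        have zz': "\<forall>i. Suc i < n \<longrightarrow> (f (u' (Suc i)) - f (u' i)) * (f (u' (Suc (Suc i))) - f (u' (Suc i))) < 0"
        proof (intro allI impI)
          fix i assume i: "Suc i < n"
          show "(f (u' (Suc i)) - f (u' i)) * (f (u' (Suc (Suc i))) - f (u' (Suc i))) < 0"
          proof (cases "i = 0")
            case True
            have "D1 * (f (u 3) - f (u 2)) < 0"
              using zz[rule_format, of 1] i True unfolding D1_def by (simp add: numeral_3_eq_3 numeral_2_eq_2)
            then have "X * (f (u 3) - f (u 2)) < 0"
              using sign_aux[OF D0X \<open>D0 * D1 < 0\<close>] by blast
            then show ?thesis using True unfolding u'_def X_def by (simp add: numeral_3_eq_3 numeral_2_eq_2)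
          next
            case False
            then show ?thesis using zz[rule_format, of "Suc i"] i unfolding u'_def by simp
          qed
        qed
        have IH: "n - 1 \<le> card (S \<inter> {u' 0<..<u' n})" using Suc.IH[OF inc' zz'] .
        have un: "u' n = u (Suc n)" "u' 0 = c" unfolding u'_def using n1 by auto
        have sub: "insert c (S \<inter> {c<..<u (Suc n)}) \<subseteq> S \<inter> {u 0<..<u (Suc n)}"
          using c1 u01 u2n by auto
        have "card (insert c (S \<inter> {c<..<u (Suc n)})) = Suc (card (S \<inter> {c<..<u (Suc n)}))"
          using fin by (intro card_insert_disjoint) auto
        moreover have "card (insert c (S \<inter> {c<..<u (Suc n)})) \<le> card (S \<inter> {u 0<..<u (Suc n)})"
          using card_mono[OF finB sub] .
        ultimately show ?thesis using IH un n1 by simp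
      qed
    qed
  qed
qed

lemma pieces_pl:
  assumes cont: "continuous_on UNIV \<sigma>" and pp: "pieces_partition \<sigma> p"
  shows "\<exists>R. finite R \<and> card R \<le> p - 1 \<and> pl R \<sigma>"
proof -
  obtain P where finP: "finite P" and cP: "card P = p"
    and PI: "\<forall>I\<in>P. is_interval I \<and> I \<noteq> {} \<and> affine_on_set I \<sigma>"
    and disj: "pairwise disjnt P" and cov: "\<Union>P = UNIV"
    using pp unfolding pieces_partition_def by blast
  define R where "R = Inf ` {I\<in>P. bdd_below I}"
  have finR: "finite R" unfolding R_def using finP by simp
  have unb: "\<exists>I\<in>P. \<not> bdd_below I"
  proof (rule ccontr)
    assume "\<not> (\<exists>I\<in>P. \<not> bdd_below I)"
    hence bdd: "\<forall>I\<in>P. bdd_below I" by simp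
    have Pne: "P \<noteq> {}" using cov by auto
    define m where "m = Min (Inf ` P)"
    have "m - 1 \<in> \<Union>P" using cov by simp
    then obtain I where I: "I \<in> P" "m - 1 \<in> I" by blast
    have "Inf I \<le> m - 1" using cInf_lower[OF I(2)] bdd I(1) by auto
    moreover have "m \<le> Inf I" unfolding m_def using finP I(1) by (intro Min_le) auto
    ultimately show False by simp
  qed
  have "{I\<in>P. bdd_below I} \<subset> P" using unb by auto
  hence "card {I\<in>P. bdd_below I} < card P" using finP by (intro psubset_card_mono) auto
  moreover have "card R \<le> card {I\<in>P. bdd_below I}" unfolding R_def by (rule card_image_le) (use finP in simp)
  ultimately have cR: "card R \<le> p - 1" using cP by simp
  have "pl R \<sigma>"
    unfolding pl_def
  proof (intro allI impI)
    fix a b :: real assume Rab: "R \<inter> {a<..<b} = {}"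
    show "affine_on_set {a..b} \<sigma>"
    proof (cases "a < b")
      case False then show ?thesis by (rule affine_triv)
    next
      case True
      define m where "m = (a + b) / 2"
      have m: "a < m" "m < b" unfolding m_def using True by auto
      have "m \<in> \<Union>P" using cov by simp
      then obtain I where I: "I \<in> P" "m \<in> I" by blast
      have sub: "{a<..<b} \<subseteq> I"
      proof
        fix x assume x: "x \<in> {a<..<b}"
        have "x \<in> \<Union>P" using cov by simp
        then obtain J where J: "J \<in> P" "x \<in> J" by blast
        show "x \<in> I"
        proof (cases "J = I")
          case True then show ?thesis using J by simp
        next
          case False
          then have dIJ: "I \<inter> J = {}" using disj I(1) J(1) unfolding pairwise_def disjnt_def by blast
          have iI: "is_interval I" and iJ: "is_interval J" using PI I(1) J(1) by auto
          consider "m < x" | "x < m" | "x = m" by linarith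
          then show ?thesis
          proof cases
            case 1
            have lb: "\<forall>y\<in>J. m \<le> y"
            proof
              fix y assume y: "y \<in> J"
              show "m \<le> y"
              proof (rule ccontr)
                assume "\<not> m \<le> y"
                then have "y \<le> m" "m \<le> x" using 1 by auto
                have iv: "\<And>a b z. a \<in> J \<Longrightarrow> b \<in> J \<Longrightarrow> a \<le> z \<Longrightarrow> z \<le> b \<Longrightarrow> z \<in> J"
                  using iJ unfolding is_interval_1 by blast
                have "m \<in> J" by (rule iv[OF y J(2) \<open>y \<le> m\<close> \<open>m \<le> x\<close>])
                then show False using dIJ I(2) by blast
              qed
            qed
            have bJ: "bdd_below J" using lb by (intro bdd_belowI[of J m]) simp
            have "m \<le> Inf J" using J(2) lb by (intro cInf_greatest) auto
            moreover have "Inf J \<le> x" using cInf_lower[OF J(2) bJ] .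
            moreover have "Inf J \<in> R" unfolding R_def using J(1) bJ by (intro imageI) simp
            ultimately show ?thesis using Rab m x by auto
          next
            case 2
            have lb: "\<forall>y\<in>I. x \<le> y"
            proof
              fix y assume y: "y \<in> I"
              show "x \<le> y"
              proof (rule ccontr)
                assume "\<not> x \<le> y"
                then have "y \<le> x" "x \<le> m" using 2 by auto
                have iv: "\<And>a b z. a \<in> I \<Longrightarrow> b \<in> I \<Longrightarrow> a \<le> z \<Longrightarrow> z \<le> b \<Longrightarrow> z \<in> I"
                  using iI unfolding is_interval_1 by blast
                have "x \<in> I" by (rule iv[OF y I(2) \<open>y \<le> x\<close> \<open>x \<le> m\<close>])
                then show False using dIJ J(2) by blast
              qed
            qed
            have bI: "bdd_below I" using lb by (intro bdd_belowI[of I x]) simp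
            have "x \<le> Inf I" using I(2) lb by (intro cInf_greatest) auto
            moreover have "Inf I \<le> m" using cInf_lower[OF I(2) bI] .
            moreover have "Inf I \<in> R" unfolding R_def using I(1) bI by (intro imageI) simp
            ultimately show ?thesis using Rab m x by auto
          next
            case 3 then show ?thesis using I(2) by simp
          qed
        qed
      qed
      obtain \<alpha> \<beta> where ab: "\<forall>x\<in>I. \<sigma> x = \<alpha> * x + \<beta>" using PI I(1) unfolding affine_on_set_def by blast
      have cl: "closed {x. \<sigma> x = \<alpha> * x + \<beta>}"
        by (rule closed_Collect_eq[OF cont]) (intro continuous_intros)
      have "{a<..<b} \<subseteq> {x. \<sigma> x = \<alpha> * x + \<beta>}" using sub ab by auto
      then have "closure {a<..<b} \<subseteq> {x. \<sigma> x = \<alpha> * x + \<beta>}" using closure_minimal cl by blast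
      then have "\<forall>x\<in>{a..b}. \<sigma> x = \<alpha> * x + \<beta>" using closure_greaterThanLessThan[OF True] by auto
      then show ?thesis unfolding affine_on_set_def by blast
    qed
  qed
  then show ?thesis using finR cR by blast
qed

lemma relu_pl: "pl {0} (\<lambda>t::real. max 0 t)"
  unfolding pl_def
proof (intro allI impI)
  fix a b :: real assume h: "{0} \<inter> {a<..<b} = {}"
  then have "b \<le> 0 \<or> 0 \<le> a" by auto
  then show "affine_on_set {a..b} (\<lambda>t. max 0 t)"
  proof
    assume "b \<le> 0"
    then have "\<forall>x\<in>{a..b}. max 0 x = 0 * x + 0" by auto
    then show ?thesis unfolding affine_on_set_def by blast
  next
    assume "0 \<le> a"
    then have "\<forall>x\<in>{a..b}. max 0 x = 1 * x + 0" by auto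
    then show ?thesis unfolding affine_on_set_def by blast
  qed
qed

lemma sum_if_le: "(\<Sum>j<d. (if j < k then c else 0::nat)) \<le> k * c"
proof -
  have "(\<Sum>j<d. (if j < k then c else 0::nat)) \<le> min d k * c"
    by (induction d) (auto simp: min_def split: if_splits)
  also have "\<dots> \<le> k * c" by simp
  finally show ?thesis .
qed

lemma net_pl:
  assumes finR: "finite R" and plR: "pl R \<sigma>"
  shows "\<exists>S. finite S \<and> card S \<le> k1 * card R + k2 * card R * (k1 * card R + 1) \<and>
     pl S (\<lambda>t. slnet dx d1 d2 k1 k2 \<sigma> W1 b1 W2 b2 W3 b3 (\<lambda>_. t))"
proof -
  define c where "c = card R"
  define z1 where "z1 i t = (\<Sum>j<dx. W1 i j * t) + b1 i" for i t
  define a1 where "a1 i t = (if i < k1 then \<sigma> (z1 i t) else z1 i t)" for i t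
  define z2 where "z2 i t = (\<Sum>j<d1. W2 i j * a1 j t) + b2 i" for i t
  define a2 where "a2 i t = (if i < k2 then \<sigma> (z2 i t) else z2 i t)" for i t
  have Feq: "(\<lambda>t. slnet dx d1 d2 k1 k2 \<sigma> W1 b1 W2 b2 W3 b3 (\<lambda>_. t)) = (\<lambda>t. (\<Sum>i<d2. W3 i * a2 i t) + b3)"
    unfolding slnet_def Let_def a2_def z2_def a1_def z1_def by (rule refl)
  have plz1: "pl {} (z1 i)" for i
  proof -
    have "z1 i = (\<lambda>t. (\<Sum>j<dx. W1 i j) * t + b1 i)" unfolding z1_def by (simp add: sum_distrib_right)
    then show ?thesis using pl_lin by simp
  qed
  have "\<forall>j\<in>{..<d1}. \<exists>A. finite A \<and> card A \<le> (if j < k1 then c else 0) \<and> pl A (a1 j)"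
  proof
    fix j assume "j \<in> {..<d1}"
    show "\<exists>A. finite A \<and> card A \<le> (if j < k1 then c else 0) \<and> pl A (a1 j)"
    proof (cases "j < k1")
      case True
      obtain T where T: "finite T" "card T \<le> card R * (card {} + 1)" "pl ({} \<union> T) (\<lambda>t. \<sigma> (z1 j t))"
        using pl_comp[OF finite.emptyI plz1[of j] finR plR] by (elim exE conjE) simp
      have "a1 j = (\<lambda>t. \<sigma> (z1 j t))" using True by (simp add: fun_eq_iff a1_def)
      then show ?thesis using T True unfolding c_def by (intro exI[of _ T] conjI) simp_all
    next
      case False
      have "a1 j = z1 j" using False by (simp add: fun_eq_iff a1_def)
      then show ?thesis using False plz1[of j] by (intro exI[of _ "{}"] conjI) simp_all
    qed
  qed
  from bchoice[OF this] obtain A where A: "\<forall>j\<in>{..<d1}. finite (A j) \<and> card (A j) \<le> (if j < k1 then c else 0) \<and> pl (A j) (a1 j)"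
    by blast
  define S1 where "S1 = (\<Union>j\<in>{..<d1}. A j)"
  have finS1: "finite S1" unfolding S1_def using A by auto
  have "card S1 \<le> (\<Sum>j<d1. card (A j))" unfolding S1_def by (rule card_UN_le) simp
  also have "\<dots> \<le> (\<Sum>j<d1. (if j < k1 then c else 0))" using A by (intro sum_mono) auto
  also have "\<dots> \<le> k1 * c" by (rule sum_if_le)
  finally have cS1: "card S1 \<le> k1 * c" .
  have plz2: "pl S1 (z2 i)" for i
  proof -
    have "pl (\<Union>j\<in>{..<d1}. A j) (\<lambda>t. \<Sum>j\<in>{..<d1}. W2 i j * a1 j t)"
      using A by (intro pl_sum) (auto intro: pl_scale)
    then have "pl S1 (\<lambda>t. (\<Sum>j<d1. W2 i j * a1 j t) + b2 i)" unfolding S1_def by (rule pl_add_const)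
    then show ?thesis unfolding z2_def by (simp add: fun_eq_iff)
  qed
  have "\<forall>i\<in>{..<d2}. \<exists>U. finite U \<and> card U \<le> (if i < k2 then c * (card S1 + 1) else 0) \<and> pl (S1 \<union> U) (a2 i)"
  proof
    fix i assume "i \<in> {..<d2}"
    show "\<exists>U. finite U \<and> card U \<le> (if i < k2 then c * (card S1 + 1) else 0) \<and> pl (S1 \<union> U) (a2 i)"
    proof (cases "i < k2")
      case True
      obtain T where T: "finite T" "card T \<le> card R * (card S1 + 1)" "pl (S1 \<union> T) (\<lambda>t. \<sigma> (z2 i t))"
        using pl_comp[OF finS1 plz2[of i] finR plR] by (elim exE conjE) simp
      have "a2 i = (\<lambda>t. \<sigma> (z2 i t))" using True by (simp add: fun_eq_iff a2_def)
      then show ?thesis using T True unfolding c_def by (intro exI[of _ T] conjI) simp_all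
    next
      case False
      have "a2 i = z2 i" using False by (simp add: fun_eq_iff a2_def)
      then show ?thesis using False plz2[of i] by (intro exI[of _ "{}"] conjI) simp_all
    qed
  qed
  from bchoice[OF this] obtain U where U: "\<forall>i\<in>{..<d2}. finite (U i) \<and> card (U i) \<le> (if i < k2 then c * (card S1 + 1) else 0) \<and> pl (S1 \<union> U i) (a2 i)"
    by blast
  define S where "S = S1 \<union> (\<Union>i\<in>{..<d2}. U i)"
  have finS: "finite S" unfolding S_def using finS1 U by auto
  have "pl (\<Union>i\<in>{..<d2}. S1 \<union> U i) (\<lambda>t. \<Sum>i\<in>{..<d2}. W3 i * a2 i t)"
    using U by (intro pl_sum) (auto intro: pl_scale)
  then have "pl (\<Union>i\<in>{..<d2}. S1 \<union> U i) (\<lambda>t. (\<Sum>i<d2. W3 i * a2 i t) + b3)" by (rule pl_add_const)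
  then have plF: "pl S (\<lambda>t. (\<Sum>i<d2. W3 i * a2 i t) + b3)" by (rule pl_mono) (auto simp: S_def)
  have "card (\<Union>i\<in>{..<d2}. U i) \<le> (\<Sum>i<d2. card (U i))" by (rule card_UN_le) simp
  also have "\<dots> \<le> (\<Sum>i<d2. (if i < k2 then c * (card S1 + 1) else 0))" using U by (intro sum_mono) auto
  also have "\<dots> \<le> k2 * (c * (card S1 + 1))" by (rule sum_if_le)
  finally have cU: "card (\<Union>i\<in>{..<d2}. U i) \<le> k2 * (c * (card S1 + 1))" .
  have "card S \<le> card S1 + card (\<Union>i\<in>{..<d2}. U i)" unfolding S_def by (rule card_Un_le)
  also have "\<dots> \<le> k1 * c + k2 * (c * (k1 * c + 1))"
    using cS1 cU by (intro add_mono order.trans[OF cU]) (auto intro!: mult_le_mono)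
  finally have "card S \<le> k1 * c + k2 * c * (k1 * c + 1)" by (simp add: algebra_simps)
  then show ?thesis using finS plF Feq unfolding c_def by metis
qed

lemma memo_bound:
  assumes finR: "finite R" and plR: "pl R \<sigma>" and dx: "dx \<ge> 1"
    and mem: "memorizes dx d1 d2 k1 k2 \<sigma> N"
  shows "N \<le> k1 * card R + k2 * card R * (k1 * card R + 1) + 2"
proof -
  define xs where "xs i = (\<lambda>_::nat. real i)" for i :: nat
  define ys where "ys i = ((-1::real) ^ i)" for i :: nat
  have d1: "\<forall>i<N. \<forall>j<N. i \<noteq> j \<longrightarrow> (\<exists>t<dx. xs i t \<noteq> xs j t)"
  proof (intro allI impI)
    fix i j assume "i < N" "j < N" "i \<noteq> j"
    then show "\<exists>t<dx. xs i t \<noteq> xs j t" using dx unfolding xs_def by (intro exI[of _ 0]) simp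
  qed
  have d2: "\<forall>i<N. \<bar>ys i\<bar> \<le> 1" unfolding ys_def by (simp add: power_abs)
  have "(\<forall>i<N. \<forall>j<N. i \<noteq> j \<longrightarrow> (\<exists>t<dx. xs i t \<noteq> xs j t)) \<and> (\<forall>i<N. \<bar>ys i\<bar> \<le> 1)"
    using d1 d2 by blast
  from mp[OF mem[unfolded memorizes_def, THEN spec[of _ xs], THEN spec[of _ ys]] this]
  obtain W1 b1 W2 b2 W3 b3 where fit: "\<forall>i<N. slnet dx d1 d2 k1 k2 \<sigma> W1 b1 W2 b2 W3 b3 (xs i) = ys i"
    by (elim exE)
  define F where "F t = slnet dx d1 d2 k1 k2 \<sigma> W1 b1 W2 b2 W3 b3 (\<lambda>_. t)" for t
  have Fv: "F (real i) = (-1) ^ i" if "i < N" for i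
    using fit that unfolding F_def xs_def ys_def by simp
  have Feq: "(\<lambda>t. slnet dx d1 d2 k1 k2 \<sigma> W1 b1 W2 b2 W3 b3 (\<lambda>_. t)) = F" by (simp add: fun_eq_iff F_def)
  obtain S where S: "finite S" "card S \<le> k1 * card R + k2 * card R * (k1 * card R + 1)" "pl S F"
    using net_pl[OF finR plR, of k1 k2 dx d1 d2 W1 b1 W2 b2 W3 b3] unfolding Feq by (elim exE conjE) simp
  have inc: "\<forall>i<N - 1. real i < real (Suc i)" by simp
  have zz: "\<forall>i. Suc i < N - 1 \<longrightarrow> (F (real (Suc i)) - F (real i)) * (F (real (Suc (Suc i))) - F (real (Suc i))) < 0"
  proof (intro allI impI)
    fix i assume i: "Suc i < N - 1"
    then have "Suc i < N" "i < N" "Suc (Suc i) < N" by auto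
    then have "F (real (Suc i)) = (-1) ^ Suc i" "F (real i) = (-1) ^ i" "F (real (Suc (Suc i))) = (-1) ^ Suc (Suc i)"
      using Fv by (simp del: of_nat_Suc power_Suc)+
    then show "(F (real (Suc i)) - F (real i)) * (F (real (Suc (Suc i))) - F (real (Suc i))) < 0"
      by (cases "even i") auto
  qed
  have "N - 1 - 1 \<le> card (S \<inter> {real 0<..<real (N - 1)})"
    using zigzag[OF S(1) S(3), of "N - 1" real] inc zz by blast
  also have "\<dots> \<le> card S" using S(1) by (intro card_mono) auto
  finally have "N \<le> card S + 2" by simp
  then show ?thesis using S(2) by simp
qed

lemma nat_floor_real: assumes "x \<in> \<int>" "0 \<le> x" shows "real (nat \<lfloor>x\<rfloor>) = x"
proof -
  obtain m where m: "x = of_int m" using assms(1) by (auto elim: Ints_cases)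
  then have "m \<ge> 0" using assms(2) by simp
  then show ?thesis using m by simp
qed

lemma arith1:
  fixes K1 K2 C P D2 N :: real
  assumes "K1 \<ge> 0" "K2 \<ge> 0" "0 \<le> C" "C \<le> P - 1" "D2 \<ge> 1" "P \<ge> 2"
    and "N \<le> K1 * C + K2 * C * (K1 * C + 1) + 2"
  shows "N \<le> K1 * K2 * P * (P - 1) + K2 * (P - 1) + K1 * (D2 - K2) * (P - 1) + 2"
proof -
  have a: "K1 * C \<le> K1 * (P - 1)" using assms by (intro mult_left_mono) auto
  have b: "C * (K1 * C + 1) \<le> (P - 1) * (K1 * (P - 1) + 1)"
    using assms a by (intro mult_mono) auto
  have c: "K2 * C * (K1 * C + 1) \<le> K2 * ((P - 1) * (K1 * (P - 1) + 1))"
    using mult_left_mono[OF b assms(2)] by (simp add: mult.assoc)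
  have d: "K1 * (P - 1) * (D2 - 1) \<ge> 0" using assms by auto
  have "K1 * K2 * P * (P - 1) + K2 * (P - 1) + K1 * (D2 - K2) * (P - 1) + 2
      = K1 * (P - 1) + K2 * ((P - 1) * (K1 * (P - 1) + 1)) + 2 + K1 * (P - 1) * (D2 - 1)"
    by (simp add: algebra_simps)
  then show ?thesis using assms(7) a c d by linarith
qed

theorem corollary1:
  fixes dx d1 d2 p :: nat and \<sigma> :: "real \<Rightarrow> real" and \<alpha>1 \<alpha>2 :: real
  assumes "dx \<ge> 1" "d1 \<ge> 1" "d2 \<ge> 1"
    and "continuous_on UNIV \<sigma>" "has_linear_pieces \<sigma> p" "p \<ge> 2"
    and "0 \<le> \<alpha>1" "\<alpha>1 \<le> 1" "0 \<le> \<alpha>2" "\<alpha>2 \<le> 1"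
    and "\<alpha>1 * real d1 \<in> \<int>" "\<alpha>2 * real d2 \<in> \<int>"
  shows "(\<forall>N. memorizes dx d1 d2 (nat \<lfloor>\<alpha>1 * real d1\<rfloor>) (nat \<lfloor>\<alpha>2 * real d2\<rfloor>) \<sigma> N \<longrightarrow>
            real N \<le> \<alpha>1 * \<alpha>2 * real d1 * real d2 * real p * (real p - 1)
                    + \<alpha>2 * real d2 * (real p - 1)
                    + \<alpha>1 * (1 - \<alpha>2) * real d1 * real d2 * (real p - 1) + 2)
       \<and> (\<forall>N. memorizes dx d1 d2 (nat \<lfloor>\<alpha>1 * real d1\<rfloor>) (nat \<lfloor>\<alpha>2 * real d2\<rfloor>) (\<lambda>t. max 0 t) N \<longrightarrow>
            real N \<le> \<alpha>1 * (1 + \<alpha>2) * real d1 * real d2 + \<alpha>2 * real d2 + 2)"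
proof -
  define k1 where "k1 = nat \<lfloor>\<alpha>1 * real d1\<rfloor>"
  define k2 where "k2 = nat \<lfloor>\<alpha>2 * real d2\<rfloor>"
  have K1: "real k1 = \<alpha>1 * real d1" unfolding k1_def using assms(7,11) by (intro nat_floor_real) auto
  have K2: "real k2 = \<alpha>2 * real d2" unfolding k2_def using assms(9,12) by (intro nat_floor_real) auto
  have K2le: "real k2 \<le> real d2" using K2 assms(9,10) by (simp add: mult_left_le_one_le)
  have part1: "\<forall>N. memorizes dx d1 d2 k1 k2 \<sigma> N \<longrightarrow>
            real N \<le> \<alpha>1 * \<alpha>2 * real d1 * real d2 * real p * (real p - 1)
                    + \<alpha>2 * real d2 * (real p - 1)
                    + \<alpha>1 * (1 - \<alpha>2) * real d1 * real d2 * (real p - 1) + 2"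
  proof (intro allI impI)
    fix N assume mem: "memorizes dx d1 d2 k1 k2 \<sigma> N"
    have pp: "pieces_partition \<sigma> p" using assms(5) unfolding has_linear_pieces_def by simp
    obtain R where R: "finite R" "card R \<le> p - 1" "pl R \<sigma>" using pieces_pl[OF assms(4) pp] by blast
    have "N \<le> k1 * card R + k2 * card R * (k1 * card R + 1) + 2"
      using memo_bound[OF R(1) R(3) assms(1) mem] .
    then have Nb: "real N \<le> real k1 * real (card R) + real k2 * real (card R) * (real k1 * real (card R) + 1) + 2"
      by (metis (mono_tags, lifting) of_nat_1 of_nat_add of_nat_le_iff of_nat_mult of_nat_numeral)
    have C: "real (card R) \<le> real p - 1" using R(2) assms(6) by linarith
    have "real N \<le> real k1 * real k2 * real p * (real p - 1) + real k2 * (real p - 1)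
          + real k1 * (real d2 - real k2) * (real p - 1) + 2"
      using assms(3,6) C Nb by (intro arith1) auto
    then show "real N \<le> \<alpha>1 * \<alpha>2 * real d1 * real d2 * real p * (real p - 1)
                    + \<alpha>2 * real d2 * (real p - 1)
                    + \<alpha>1 * (1 - \<alpha>2) * real d1 * real d2 * (real p - 1) + 2"
      unfolding K1 K2 by (simp add: algebra_simps)
  qed
  have part2: "\<forall>N. memorizes dx d1 d2 k1 k2 (\<lambda>t. max 0 t) N \<longrightarrow>
            real N \<le> \<alpha>1 * (1 + \<alpha>2) * real d1 * real d2 + \<alpha>2 * real d2 + 2"
  proof (intro allI impI)
    fix N assume mem: "memorizes dx d1 d2 k1 k2 (\<lambda>t. max 0 t) N"
    have "N \<le> k1 * card {0::real} + k2 * card {0::real} * (k1 * card {0::real} + 1) + 2"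
      using memo_bound[OF finite.emptyI[THEN finite.insertI] relu_pl assms(1) mem] .
    then have "N \<le> k1 + k2 * (k1 + 1) + 2" by simp
    then have Nb: "real N \<le> real k1 + real k2 * (real k1 + 1) + 2"
      by (metis (mono_tags, lifting) of_nat_1 of_nat_add of_nat_le_iff of_nat_mult of_nat_numeral)
    have "real k1 \<le> real k1 * real d2" using assms(3) by (simp add: mult_le_cancel_left1)
    then have "real N \<le> real k1 * real d2 + real k1 * real k2 + real k2 + 2" using Nb by (simp add: algebra_simps)
    then show "real N \<le> \<alpha>1 * (1 + \<alpha>2) * real d1 * real d2 + \<alpha>2 * real d2 + 2"
      using K1 K2 by (simp add: algebra_simps)
  qed
  show ?thesis using part1 part2 unfolding k1_def k2_def by blast
qed

end
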